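(* Let $q_1,q_2$ be integers with $1\le q_1\le q_2$, $A=\begin{pmatrix}3q_1&0\\0&3q_2\end{pmatrix}$, $\mathcal{D}=\left\{\begin{pmatrix}0\\0\end{pmatrix},\begin{pmatrix}1\\0\end{pmatrix},\begin{pmatrix}0\\1\end{pmatrix}\right\}$. For $n\ge0$ let $\nu_n=\delta_{A^{-(n+1)}\mathcal{D}}*\delta_{A^{-(n+2)}\mathcal{D}}*\cdots$ (infinite convolution). Let $n\ge1$ and suppose $\Lambda$ is an orthogonal set of $\nu_n$. Then $\Lambda$ is an orthogonal set of $\nu_{n-1}$, but $\Lambda$ is not a maximal orthogonal set of $\nu_{n-1}$.
   Context: For a finite set $E\subseteq\mathbb{R}^2$, $\delta_E=\frac{1}{\#E}\sum_{e\in E}\delta_e$ is the uniform probability measure on $E$; the infinite convolution converges weakly to a Borel probability measure ($\nu_0$ is the self-affine measure $\mu_{A,\mathcal{D}}$). A countable $\Lambda\subseteq\mathbb{R}^2$ is an orthogonal set of $\mu$ if $\{e^{-2\pi i\langle\lambda,x\rangle}:\lambda\in\Lambda\}$ is orthogonal in $L^2(\mu)$; it is maximal if it is not properly contained in another orthogonal set of $\mu$. *)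

theory Defs
  imports "HOL-Probability.Probability"
begin

text \<open>The expanding matrix A = diag(3 q1, 3 q2).\<close>
definition matA :: "int \<Rightarrow> int \<Rightarrow> real^2^2" where
  "matA q1 q2 = (\<chi> i j. if i = j then (if i = 1 then 3 * real_of_int q1 else 3 * real_of_int q2) else 0)"

text \<open>The digit set D = {(0,0),(1,0),(0,1)}.\<close>
definition digitD :: "(real^2) set" where
  "digitD = {\<chi> i. 0, \<chi> i. if i = 1 then 1 else 0, \<chi> i. if i = 2 then 1 else 0}"

text \<open>Matrix powers.\<close>
primrec mpow :: "real^'n^'n \<Rightarrow> nat \<Rightarrow> real^'n^'n" where
  "mpow M 0 = mat 1"
| "mpow M (Suc k) = M ** mpow M k"

text \<open>A^{-k}.\<close>
definition Ainvpow :: "int \<Rightarrow> int \<Rightarrow> nat \<Rightarrow> real^2^2" where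
  "Ainvpow q1 q2 k = matrix_inv (mpow (matA q1 q2) k)"

text \<open>Uniform probability measure on a finite set E.\<close>
definition deltaE :: "'a set \<Rightarrow> 'a pmf" where
  "deltaE E = pmf_of_set E"

text \<open>Convolution of (discrete) probability measures.\<close>
definition conv_pmf :: "'a::plus pmf \<Rightarrow> 'a pmf \<Rightarrow> 'a pmf" where
  "conv_pmf p q = map_pmf (\<lambda>(x, y). x + y) (pair_pmf p q)"

text \<open>Finite partial convolution
  delta_{A^{-(n+1)}D} * ... * delta_{A^{-(n+m)}D}.\<close>
primrec fin_conv :: "int \<Rightarrow> int \<Rightarrow> nat \<Rightarrow> nat \<Rightarrow> (real^2) pmf" where
  "fin_conv q1 q2 n 0 = return_pmf 0"
| "fin_conv q1 q2 n (Suc m) =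
     conv_pmf (fin_conv q1 q2 n m) (deltaE ((\<lambda>d. Ainvpow q1 q2 (n + m + 1) *v d) ` digitD))"

text \<open>Weak convergence of a sequence of measures to a measure on R^2.\<close>
definition weak_conv_seq :: "(nat \<Rightarrow> (real^2) measure) \<Rightarrow> (real^2) measure \<Rightarrow> bool" where
  "weak_conv_seq M N \<longleftrightarrow>
     (\<forall>f :: real^2 \<Rightarrow> real. continuous_on UNIV f \<longrightarrow> bounded (range f) \<longrightarrow>
        (\<lambda>m. integral\<^sup>L (M m) f) \<longlonglongrightarrow> integral\<^sup>L N f)"

text \<open>Exponential e_lambda(x) = exp(-2 pi i <lambda, x>).\<close>
definition expo :: "real^2 \<Rightarrow> real^2 \<Rightarrow> complex" where
  "expo l x = exp (- 2 * pi * \<i> * complex_of_real (l \<bullet> x))"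

text \<open>Orthogonal set of mu: countable and the exponentials are pairwise orthogonal in L^2(mu).\<close>
definition orthogonal_set :: "(real^2) measure \<Rightarrow> (real^2) set \<Rightarrow> bool" where
  "orthogonal_set \<mu> \<Lambda> \<longleftrightarrow> countable \<Lambda> \<and>
     (\<forall>l\<in>\<Lambda>. \<forall>l'\<in>\<Lambda>. l \<noteq> l' \<longrightarrow>
        integral\<^sup>L \<mu> (\<lambda>x. expo l x * cnj (expo l' x)) = 0)"

definition maximal_orthogonal_set :: "(real^2) measure \<Rightarrow> (real^2) set \<Rightarrow> bool" where
  "maximal_orthogonal_set \<mu> \<Lambda> \<longleftrightarrow> orthogonal_set \<mu> \<Lambda> \<and>
     \<not> (\<exists>\<Lambda>'. \<Lambda> \<subset> \<Lambda>' \<and> orthogonal_set \<mu> \<Lambda>')"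

end

theory Submission imports Defs begin

definition ex :: "real \<Rightarrow> complex" where
  "ex t = exp (- 2 * pi * \<i> * complex_of_real t)"

lemma ex_cis: "ex t = cis (- (2 * pi * t))"
  unfolding ex_def cis_conv_exp by (simp add: algebra_simps)

lemma expo_ex: "expo l x = ex (l \<bullet> x)"
  by (simp add: expo_def ex_def)

lemma ex_add: "ex (a + b) = ex a * ex b"
  by (simp add: ex_cis cis_mult algebra_simps)

lemma ex_0[simp]: "ex 0 = 1" by (simp add: ex_def)

lemma norm_ex[simp]: "cmod (ex t) = 1" by (simp add: ex_cis)

lemma cnj_ex: "cnj (ex t) = ex (- t)"
  by (simp add: ex_cis cis_cnj)

lemma ex_int: "ex (of_int k) = 1"
proof -
  have "cis (- (2 * pi * of_int k)) = cis (2 * pi * of_int (-k))" by simp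
  also have "\<dots> = 1" by (metis cis_multiple_2pi Ints_of_int mult.commute)
  finally show ?thesis by (simp add: ex_cis)
qed

lemma norm_1_ex: "cmod (1 - ex t) \<le> 2 * pi * \<bar>t\<bar>"
proof -
  have "cmod (1 - ex t) = cmod (exp (\<i> * of_real (- (2 * pi * t))) - 1)"
    by (simp add: ex_cis cis_conv_exp norm_minus_commute)
  also have "\<dots> = 2 * \<bar>sin (- (2 * pi * t) / 2)\<bar>" by (rule dist_exp_i_1)
  also have "\<dots> \<le> 2 * \<bar>- (2 * pi * t) / 2\<bar>" using abs_sin_x_le_abs_x by simp
  also have "\<dots> = 2 * pi * \<bar>t\<bar>" by (simp add: abs_mult)
  finally show ?thesis .
qed

lemma Re_ex: "Re (ex t) = cos (2 * pi * t)" by (simp add: ex_cis)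

definition diag2 :: "real \<Rightarrow> real \<Rightarrow> real^2^2" where
  "diag2 a b = (\<chi> i j. if i = j then (if i = 1 then a else b) else 0)"

lemma diag2_mult: "diag2 a b ** diag2 c d = diag2 (a*c) (b*d)"
  unfolding diag2_def matrix_matrix_mult_def
  by (simp add: vec_eq_iff forall_2 sum_2)

lemma diag2_1: "mat 1 = diag2 1 1"
  unfolding diag2_def mat_def by (simp add: vec_eq_iff forall_2)

lemma mpow_diag: "mpow (matA q1 q2) k = diag2 ((3 * real_of_int q1)^k) ((3 * real_of_int q2)^k)"
proof (induction k)
  case 0 then show ?case by (simp add: diag2_1)
next
  case (Suc k)
  have "matA q1 q2 = diag2 (3 * real_of_int q1) (3 * real_of_int q2)"
    by (simp add: matA_def diag2_def)
  then show ?case using Suc by (simp add: diag2_mult)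
qed

lemma diag2_mulv: "diag2 a b *v x = (\<chi> i. if i = 1 then a * x$1 else b * x$2)"
  unfolding diag2_def matrix_vector_mult_def
  by (simp add: vec_eq_iff forall_2 sum_2)

lemma diag2_inv_mulv:
  assumes "a \<noteq> 0" "b \<noteq> 0"
  shows "matrix_inv (diag2 a b) *v x = diag2 (1/a) (1/b) *v x"
proof -
  let ?A = "diag2 a b" and ?B = "diag2 (1/a) (1/b)"
  have AB: "?A ** ?B = mat 1" "?B ** ?A = mat 1" using assms by (simp_all add: diag2_mult diag2_1)
  then have "\<exists>A'. ?A ** A' = mat 1 \<and> A' ** ?A = mat 1" by blast
  then have "?A ** matrix_inv ?A = mat 1 \<and> matrix_inv ?A ** ?A = mat 1"
    unfolding matrix_inv_def by (rule someI_ex)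
  then have I: "matrix_inv ?A ** ?A = mat 1" by blast
  have "matrix_inv ?A *v x = matrix_inv ?A *v (?A *v (?B *v x))"
    by (simp add: matrix_vector_mul_assoc AB)
  also have "\<dots> = ?B *v x" using I by (metis matrix_vector_mul_assoc matrix_vector_mul_lid)
  finally show ?thesis .
qed

lemma Ainvpow_mulv:
  assumes "q1 \<noteq> 0" "q2 \<noteq> 0"
  shows "Ainvpow q1 q2 k *v x = (\<chi> i. if i = 1 then x$1 / (3 * real_of_int q1)^k else x$2 / (3 * real_of_int q2)^k)"
  unfolding Ainvpow_def mpow_diag using assms
  by (subst diag2_inv_mulv) (auto simp add: diag2_mulv power_mult_distrib)



definition chf :: "(real^2) measure \<Rightarrow> real^2 \<Rightarrow> complex" where
  "chf M \<xi> = integral\<^sup>L M (expo \<xi>)"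

definition Mf :: "int \<Rightarrow> int \<Rightarrow> nat \<Rightarrow> real^2 \<Rightarrow> complex" where
  "Mf q1 q2 k \<xi> = (1 + ex (\<xi>$1 / (3 * real_of_int q1)^k) + ex (\<xi>$2 / (3 * real_of_int q2)^k)) / 3"

lemma image_D:
  assumes "q1 \<noteq> 0" "q2 \<noteq> 0"
  shows "(\<lambda>d. Ainvpow q1 q2 k *v d) ` digitD =
    {0, (\<chi> i. if i = 1 then 1 / (3 * real_of_int q1)^k else 0),
        (\<chi> i. if i = 1 then 0 else 1 / (3 * real_of_int q2)^k)}"
  unfolding digitD_def using assms
  by (auto simp add: Ainvpow_mulv vec_eq_iff forall_2)

lemma chf_delta:
  assumes "q1 \<noteq> 0" "q2 \<noteq> 0"
  shows "chf (measure_pmf (deltaE ((\<lambda>d. Ainvpow q1 q2 k *v d) ` digitD))) \<xi> = Mf q1 q2 k \<xi>"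
proof -
  define P1 :: "real^2" where "P1 = (\<chi> i. if i = 1 then 1 / (3 * real_of_int q1)^k else 0)"
  define P2 :: "real^2" where "P2 = (\<chi> i. if i = 1 then 0 else 1 / (3 * real_of_int q2)^k)"
  have d: "P1 \<noteq> 0" "P2 \<noteq> 0" "P1 \<noteq> P2" using assms
    by (auto simp: P1_def P2_def vec_eq_iff forall_2)
  have S: "(\<lambda>d. Ainvpow q1 q2 k *v d) ` digitD = {0, P1, P2}"
    unfolding P1_def P2_def by (rule image_D[OF assms])
  have e1: "expo \<xi> P1 = ex (\<xi>$1 / (3 * real_of_int q1)^k)"
    by (simp add: expo_ex P1_def inner_vec_def sum_2)
  have e2: "expo \<xi> P2 = ex (\<xi>$2 / (3 * real_of_int q2)^k)"
    by (simp add: expo_ex P2_def inner_vec_def sum_2)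
  have e0: "expo \<xi> 0 = 1" by (simp add: expo_ex)
  show ?thesis
    unfolding chf_def deltaE_def S
  proof -
    have "integral\<^sup>L (measure_pmf (pmf_of_set {0, P1, P2})) (expo \<xi>) = (\<Sum>a\<in>{0, P1, P2}. pmf (pmf_of_set {0, P1, P2}) a *\<^sub>R expo \<xi> a)"
      by (rule integral_measure_pmf) auto
    then show "integral\<^sup>L (measure_pmf (pmf_of_set {0, P1, P2})) (expo \<xi>) = Mf q1 q2 k \<xi>"
      using d by (simp add: e0 e1 e2 Mf_def scaleR_conv_of_real add_divide_distrib)
  qed
qed

lemma expo_add: "expo \<xi> (x + y) = expo \<xi> x * expo \<xi> y"
  by (simp add: expo_ex inner_add_right ex_add)

lemma chf_conv:
  assumes "finite (set_pmf p)" "finite (set_pmf q)"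
  shows "chf (measure_pmf (conv_pmf p q)) \<xi> = chf (measure_pmf p) \<xi> * chf (measure_pmf q) \<xi>"
proof -
  have "chf (measure_pmf (conv_pmf p q)) \<xi> = (\<integral>z. expo \<xi> (fst z + snd z) \<partial>measure_pmf (pair_pmf p q))"
    unfolding chf_def conv_pmf_def by (simp add: case_prod_beta)
  also have "\<dots> = (\<Sum>z\<in>set_pmf p \<times> set_pmf q. pmf (pair_pmf p q) z *\<^sub>R expo \<xi> (fst z + snd z))"
    using assms by (intro integral_measure_pmf) auto
  also have "\<dots> = (\<Sum>a\<in>set_pmf p. \<Sum>b\<in>set_pmf q. (pmf p a *\<^sub>R expo \<xi> a) * (pmf q b *\<^sub>R expo \<xi> b))"
    unfolding sum.cartesian_product by (intro sum.cong) (auto simp: pmf_pair expo_add scaleR_conv_of_real algebra_simps)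
  also have "\<dots> = (\<Sum>a\<in>set_pmf p. pmf p a *\<^sub>R expo \<xi> a) * (\<Sum>b\<in>set_pmf q. pmf q b *\<^sub>R expo \<xi> b)"
    by (simp add: sum_product)
  also have "\<dots> = chf (measure_pmf p) \<xi> * chf (measure_pmf q) \<xi>"
    unfolding chf_def using assms by (simp add: integral_measure_pmf[of "set_pmf p"] integral_measure_pmf[of "set_pmf q"])
  finally show ?thesis .
qed

lemma fin_conv_finite: "finite (set_pmf (fin_conv q1 q2 k m))"
proof (induction m)
  case 0 then show ?case by simp
next
  case (Suc m)
  have "finite (set_pmf (deltaE ((\<lambda>d. Ainvpow q1 q2 (k + m + 1) *v d) ` digitD)))"
    unfolding deltaE_def digitD_def by (subst set_pmf_of_set) auto
  with Suc show ?case by (simp add: conv_pmf_def)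
qed

lemma chf_fin_conv:
  assumes "q1 \<noteq> 0" "q2 \<noteq> 0"
  shows "chf (measure_pmf (fin_conv q1 q2 k m)) \<xi> = (\<Prod>i<m. Mf q1 q2 (k + i + 1) \<xi>)"
proof (induction m)
  case 0 then show ?case by (simp add: chf_def expo_ex)
next
  case (Suc m)
  have "finite (set_pmf (deltaE ((\<lambda>d. Ainvpow q1 q2 (k + m + 1) *v d) ` digitD)))"
    unfolding deltaE_def digitD_def by (subst set_pmf_of_set) auto
  with Suc show ?case by (simp add: chf_conv fin_conv_finite chf_delta assms)
qed


definition cc :: "real^2 \<Rightarrow> real" where "cc \<xi> = 2 * pi * (\<bar>\<xi>$1\<bar> + \<bar>\<xi>$2\<bar>)"

lemma norm_Mf: "cmod (Mf q1 q2 j \<xi>) \<le> 1"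
proof -
  have "cmod (1 + ex (\<xi>$1 / (3 * real_of_int q1)^j) + ex (\<xi>$2 / (3 * real_of_int q2)^j)) \<le> 3"
    by (rule order_trans[OF norm_triangle_ineq]) (rule order_trans[OF add_mono[OF norm_triangle_ineq order_refl]], simp)
  then show ?thesis by (simp add: Mf_def norm_divide)
qed

lemma small_ratio:
  assumes "1 \<le> q"
  shows "\<bar>x / (3 * real_of_int q)^j\<bar> \<le> \<bar>x\<bar> / 3^j"
proof -
  have "(3::real)^j \<le> (3 * real_of_int q)^j" using assms by (intro power_mono) auto
  moreover have "(0::real) < 3^j" by simp
  ultimately show ?thesis by (simp add: abs_div frac_le abs_mult)
qed

lemma norm_1_Mf:
  assumes "1 \<le> q1" "1 \<le> q2"
  shows "cmod (1 - Mf q1 q2 j \<xi>) \<le> cc \<xi> / 3^j"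
proof -
  let ?a = "\<xi>$1 / (3 * real_of_int q1)^j" and ?b = "\<xi>$2 / (3 * real_of_int q2)^j"
  have eq: "1 - Mf q1 q2 j \<xi> = ((1 - ex ?a) + (1 - ex ?b)) / 3" by (simp add: Mf_def field_simps)
  have "cmod ((1 - ex ?a) + (1 - ex ?b)) \<le> 2 * pi * \<bar>?a\<bar> + 2 * pi * \<bar>?b\<bar>"
    by (rule order_trans[OF norm_triangle_ineq]) (intro add_mono norm_1_ex)
  also have "\<dots> \<le> 2 * pi * (\<bar>\<xi>$1\<bar> / 3^j) + 2 * pi * (\<bar>\<xi>$2\<bar> / 3^j)"
    using small_ratio[OF assms(1), of "\<xi>$1" j] small_ratio[OF assms(2), of "\<xi>$2" j]
    by (intro add_mono mult_left_mono) auto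
  also have "\<dots> = cc \<xi> / 3^j" by (simp add: cc_def field_simps)
  finally have "cmod ((1 - ex ?a) + (1 - ex ?b)) \<le> cc \<xi> / 3^j" .
  moreover have "0 \<le> cc \<xi> / 3^j" by (simp add: cc_def)
  moreover have "cmod (1 - Mf q1 q2 j \<xi>) = cmod ((1 - ex ?a) + (1 - ex ?b)) / 3"
    by (simp only: eq norm_divide) simp
  ultimately show ?thesis by linarith
qed

lemma geom_sum: "(\<Sum>i<m. (1/3::real)^(i+1)) = (1 - (1/3)^m) / 2"
proof (induction m)
  case 0 then show ?case by simp
next
  case (Suc m)
  have "(\<Sum>i<Suc m. (1/3::real)^(i+1)) = (1 - (1/3)^m) / 2 + (1/3)^m / 3"
    using Suc by simp
  also have "\<dots> = (1 - (1/3)^(Suc m)) / 2" by (simp add: field_simps)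
  finally show ?case .
qed

lemma norm_1_prod:
  assumes "1 \<le> q1" "1 \<le> q2"
  shows "cmod (1 - (\<Prod>i<m. Mf q1 q2 (k + i + 1) \<xi>)) \<le> cc \<xi> / 3^k"
proof -
  have "cmod ((\<Prod>i<m. (1::complex)) - (\<Prod>i<m. Mf q1 q2 (k + i + 1) \<xi>)) \<le> (\<Sum>i<m. cmod (1 - Mf q1 q2 (k + i + 1) \<xi>))"
    by (rule norm_prod_diff) (simp_all add: norm_Mf)
  also have "\<dots> \<le> (\<Sum>i<m. cc \<xi> / 3^k * (1/3)^(i+1))"
  proof (intro sum_mono)
    fix i assume "i \<in> {..<m}"
    have "cc \<xi> / 3^(k + i + 1) = cc \<xi> / 3^k * (1/3)^(i+1)"
      by (simp add: power_add power_one_over field_simps)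
    then show "cmod (1 - Mf q1 q2 (k + i + 1) \<xi>) \<le> cc \<xi> / 3^k * (1/3)^(i+1)"
      using norm_1_Mf[OF assms, of "k+i+1" \<xi>] by simp
  qed
  also have "\<dots> = cc \<xi> / 3^k * ((1 - (1/3)^m) / 2)"
    by (subst sum_distrib_left[symmetric]) (simp only: geom_sum)
  also have "\<dots> \<le> cc \<xi> / 3^k * 1"
  proof (intro mult_left_mono)
    have h: "(1 - y) / 2 \<le> (1::real)" if "0 \<le> y" for y using that by simp
    show "(1 - (1/3::real)^m) / 2 \<le> 1" by (rule h) simp
  qed (auto simp: cc_def)
  finally show ?thesis by simp
qed

lemma integrable_expo:
  assumes "finite_measure M" "sets M = sets borel"
  shows "integrable M (expo \<xi>)"
proof -
  have c: "continuous_on UNIV (expo \<xi>)" unfolding expo_def by (intro continuous_intros)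
  have m: "expo \<xi> \<in> borel_measurable M"
    using borel_measurable_continuous_onI[OF c] measurable_cong_sets[OF assms(2) refl] by blast
  show ?thesis
    by (rule finite_measure.integrable_const_bound[OF assms(1), where B=1]) (auto simp: m expo_ex)
qed

lemma integrable_expo_pmf: "integrable (measure_pmf p) (expo \<xi>)"
  by (rule measure_pmf.integrable_const_bound[where B=1]) (auto simp: expo_ex)

lemma chf_limit:
  assumes "prob_space M" "sets M = sets borel"
    and "weak_conv_seq (\<lambda>m. measure_pmf (P m)) M"
  shows "(\<lambda>m. chf (measure_pmf (P m)) \<xi>) \<longlonglongrightarrow> chf M \<xi>"
proof -
  have fm: "finite_measure M" using assms(1) prob_space.finite_measure by blast
  have c: "continuous_on UNIV (expo \<xi>)" unfolding expo_def by (intro continuous_intros)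
  have bR: "bounded (range (\<lambda>x. Re (expo \<xi> x)))"
    unfolding bounded_iff by (rule exI[of _ 1]) (auto simp: expo_ex intro: order_trans[OF abs_Re_le_cmod])
  have bI: "bounded (range (\<lambda>x. Im (expo \<xi> x)))"
    unfolding bounded_iff by (rule exI[of _ 1]) (auto simp: expo_ex intro: order_trans[OF abs_Im_le_cmod])
  have R: "(\<lambda>m. integral\<^sup>L (measure_pmf (P m)) (\<lambda>x. Re (expo \<xi> x))) \<longlonglongrightarrow> integral\<^sup>L M (\<lambda>x. Re (expo \<xi> x))"
    using assms(3) unfolding weak_conv_seq_def
    by (auto intro!: continuous_intros c bR)
  have I: "(\<lambda>m. integral\<^sup>L (measure_pmf (P m)) (\<lambda>x. Im (expo \<xi> x))) \<longlonglongrightarrow> integral\<^sup>L M (\<lambda>x. Im (expo \<xi> x))"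
    using assms(3) unfolding weak_conv_seq_def
    by (auto intro!: continuous_intros c bI)
  show ?thesis
    unfolding tendsto_complex_iff chf_def
    using R I integrable_expo[OF fm assms(2)] integrable_expo_pmf by simp
qed


lemma ex_eq_1: "ex t = 1 \<Longrightarrow> \<exists>k::int. t = of_int k"
proof -
  assume "ex t = 1"
  then have "Re (ex t) = 1" by simp
  then have "cos (2 * pi * t) = 1" by (simp add: Re_ex)
  then obtain k :: int where "2 * pi * t = of_int k * 2 * pi" by (auto simp: cos_one_2pi_int)
  then have "t = of_int k" by simp
  then show ?thesis by blast
qed

lemma root3:
  assumes "ex (3 * t) = 1" "ex t \<noteq> 1"
  shows "1 + ex t + ex (2 * t) = 0"
proof -
  have e2: "ex (2 * t) = ex t * ex t" using ex_add[of t t] by simp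
  have e3: "ex (3 * t) = ex t * ex t * ex t" using ex_add[of "2*t" t] e2 by (simp add: algebra_simps)
  have "(ex t - 1) * (1 + ex t + ex (2 * t)) = ex (3 * t) - 1" unfolding e2 e3 by (simp add: algebra_simps)
  then have "(ex t - 1) * (1 + ex t + ex (2 * t)) = 0" using assms(1) by simp
  with assms(2) show ?thesis by simp
qed

lemma root3_pos: "1 + ex (1/3) + ex (2/3) = 0"
proof -
  have a: "ex (3 * (1/3)) = 1" using ex_int[of 1] by simp
  have b: "ex (1/3) \<noteq> 1"
  proof
    assume "ex (1/3) = 1"
    then obtain k :: int where "1/3 = real_of_int k" using ex_eq_1 by blast
    then have "1 = 3 * real_of_int k" by simp
    then have "(1::int) = 3 * k" by linarith
    then show False by presburger
  qed
  show ?thesis using root3[OF a b] by simp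
qed

lemma root3_neg: "1 + ex (-1/3) + ex (-2/3) = 0"
proof -
  have a: "ex (3 * (-1/3)) = 1" using ex_int[of "-1"] by simp
  have b: "ex (-1/3) \<noteq> 1"
  proof
    assume "ex (-1/3) = 1"
    then obtain k :: int where "-1/3 = real_of_int k" using ex_eq_1 by blast
    then have "-1 = 3 * real_of_int k" by simp
    then have "(-1::int) = 3 * k" by linarith
    then show False by presburger
  qed
  show ?thesis using root3[OF a b] by simp
qed

lemma sum3_zero:
  assumes "1 + ex a + ex b = 0"
  shows "\<exists>k::int. 3 * a = of_int k"
proof -
  define th where "th = - (2 * pi * a)"
  have x: "ex a = cis th" by (simp add: ex_cis th_def)
  have "ex b = - (1 + cis th)" using assms x by (simp add: algebra_simps eq_neg_iff_add_eq_0)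
  then have "cmod (1 + cis th) = 1" by (metis norm_ex norm_minus_cancel)
  then have "(cmod (1 + cis th))^2 = 1" by simp
  then have "(1 + cos th)^2 + (sin th)^2 = 1" by (simp add: cmod_power2)
  moreover have "(1 + cos th)^2 = 1 + 2 * cos th + (cos th)^2" by (simp add: power2_sum)
  moreover have "(sin th)^2 + (cos th)^2 = 1" by (rule sin_cos_squared_add)
  ultimately have "cos th = -1/2" by linarith
  then have "cos (3 * th) = 1" by (simp add: cos_treble_cos power3_eq_cube)
  then obtain k :: int where "3 * th = of_int k * 2 * pi" by (auto simp: cos_one_2pi_int)
  then have "pi * (3 * a) = pi * (- of_int k)" by (simp add: th_def algebra_simps)
  then have "3 * a = - of_int k" using pi_gt_zero by (metis mult_cancel_left mult_minus_right less_irrefl)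
  then have "3 * a = of_int (-k)" by simp
  then show ?thesis by blast
qed

lemma Mf_zero:
  assumes "Mf q1 q2 j \<xi> = 0"
  shows "(\<exists>k::int. 3 * (\<xi>$1 / (3 * real_of_int q1)^j) = of_int k) \<and>
         (\<exists>k::int. 3 * (\<xi>$2 / (3 * real_of_int q2)^j) = of_int k)"
proof -
  let ?a = "\<xi>$1 / (3 * real_of_int q1)^j" and ?b = "\<xi>$2 / (3 * real_of_int q2)^j"
  have "1 + ex ?a + ex ?b = 0" using assms by (simp add: Mf_def)
  moreover have "1 + ex ?b + ex ?a = 0" using calculation by (simp add: algebra_simps)
  ultimately show ?thesis using sum3_zero by blast
qed

lemma int_lift:
  assumes "1 \<le> q" "3 * (x / (3 * real_of_int q)^(n + j + 1)) = of_int k"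
  shows "\<exists>a::int. x / (3 * real_of_int q)^n = of_int a"
proof -
  have pos: "(3 * real_of_int q) \<noteq> 0" using assms(1) by simp
  have "x / (3 * real_of_int q)^n = (x / (3 * real_of_int q)^(n + j + 1)) * (3 * real_of_int q)^(j+1)"
    using pos by (simp add: power_add field_simps)
  also have "\<dots> = 3 * (x / (3 * real_of_int q)^(n + j + 1)) * (real_of_int q * (3 * real_of_int q)^j)"
    by (simp add: algebra_simps)
  also have "\<dots> = of_int (k * (q * (3 * q)^j))" using assms(2) by simp
  finally show ?thesis by blast
qed


lemma integrand_expo: "expo l x * cnj (expo l' x) = expo (l - l') x"
  by (simp add: expo_ex cnj_ex ex_add[symmetric] inner_diff_left)

lemma orth_chf: "integral\<^sup>L M (\<lambda>x. expo l x * cnj (expo l' x)) = chf M (l - l')"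
  by (simp add: integrand_expo chf_def)

context
  fixes q1 q2 :: int and \<nu> :: "nat \<Rightarrow> (real^2) measure"
  assumes q1: "1 \<le> q1" and q2: "1 \<le> q2"
    and ps: "\<And>k. prob_space (\<nu> k)"
    and sb: "\<And>k. sets (\<nu> k) = sets borel"
    and wc: "\<And>k. weak_conv_seq (\<lambda>m. measure_pmf (fin_conv q1 q2 k m)) (\<nu> k)"
begin

lemma lim_prod: "(\<lambda>m. \<Prod>i<m. Mf q1 q2 (k + i + 1) \<xi>) \<longlonglongrightarrow> chf (\<nu> k) \<xi>"
proof -
  have "(\<lambda>m. chf (measure_pmf (fin_conv q1 q2 k m)) \<xi>) \<longlonglongrightarrow> chf (\<nu> k) \<xi>"
    by (rule chf_limit[OF ps sb wc])
  moreover have "\<And>m. chf (measure_pmf (fin_conv q1 q2 k m)) \<xi> = (\<Prod>i<m. Mf q1 q2 (k + i + 1) \<xi>)"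
    using q1 q2 by (intro chf_fin_conv) auto
  ultimately show ?thesis by simp
qed

lemma chf_rec: "chf (\<nu> k) \<xi> = Mf q1 q2 (k + 1) \<xi> * chf (\<nu> (k + 1)) \<xi>"
proof -
  have a: "(\<lambda>m. \<Prod>i<Suc m. Mf q1 q2 (k + i + 1) \<xi>) \<longlonglongrightarrow> chf (\<nu> k) \<xi>"
    using lim_prod[of k \<xi>] by (rule LIMSEQ_Suc)
  have "(\<lambda>m. Mf q1 q2 (k + 1) \<xi> * (\<Prod>i<m. Mf q1 q2 (k + 1 + i + 1) \<xi>)) \<longlonglongrightarrow> Mf q1 q2 (k + 1) \<xi> * chf (\<nu> (k + 1)) \<xi>"
    by (intro tendsto_mult_left lim_prod)
  moreover have "\<And>m. (\<Prod>i<Suc m. Mf q1 q2 (k + i + 1) \<xi>) = Mf q1 q2 (k + 1) \<xi> * (\<Prod>i<m. Mf q1 q2 (k + 1 + i + 1) \<xi>)"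
    by (subst prod.lessThan_Suc_shift) simp
  ultimately have "(\<lambda>m. \<Prod>i<Suc m. Mf q1 q2 (k + i + 1) \<xi>) \<longlonglongrightarrow> Mf q1 q2 (k + 1) \<xi> * chf (\<nu> (k + 1)) \<xi>"
    by simp
  with a show ?thesis using LIMSEQ_unique by blast
qed

lemma chf_bound: "cmod (1 - chf (\<nu> k) \<xi>) \<le> cc \<xi> / 3^k"
proof -
  have "(\<lambda>m. cmod (1 - (\<Prod>i<m. Mf q1 q2 (k + i + 1) \<xi>))) \<longlonglongrightarrow> cmod (1 - chf (\<nu> k) \<xi>)"
    by (intro tendsto_norm tendsto_diff tendsto_const lim_prod)
  then show ?thesis
    by (rule LIMSEQ_le_const2) (use norm_1_prod[OF q1 q2] in blast)
qed

lemma chf_iter: "chf (\<nu> n) \<xi> = (\<Prod>i<K. Mf q1 q2 (n + i + 1) \<xi>) * chf (\<nu> (n + K)) \<xi>"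
proof (induction K)
  case 0 then show ?case by simp
next
  case (Suc K)
  then show ?case using chf_rec[of "n + K" \<xi>] by (simp add: algebra_simps)
qed

lemma chf_zero:
  assumes "chf (\<nu> n) \<xi> = 0"
  shows "\<exists>j. Mf q1 q2 (n + j + 1) \<xi> = 0"
proof (rule ccontr)
  assume nz: "\<not> (\<exists>j. Mf q1 q2 (n + j + 1) \<xi> = 0)"
  obtain K :: nat where K: "cc \<xi> < real K" using reals_Archimedean2 by blast
  have "K < 2^K" by (rule less_exp)
  also have "(2::nat)^K \<le> 3^K" by (rule power_mono) auto
  also have "(3::nat)^K \<le> 3^(n+K)" by (rule power_increasing) auto
  finally have "real K < real (3^(n+K))" by (simp only: of_nat_less_iff)
  then have r: "real K < (3::real)^(n+K)" by simp
  with K have "cc \<xi> < (3::real)^(n+K)" by linarith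
  then have "cc \<xi> / 3^(n+K) < 1" by (simp add: divide_less_eq)
  with chf_bound[of "n+K" \<xi>] have "cmod (1 - chf (\<nu> (n + K)) \<xi>) < 1" by linarith
  then have "chf (\<nu> (n + K)) \<xi> \<noteq> 0" by auto
  moreover have "(\<Prod>i<K. Mf q1 q2 (n + i + 1) \<xi>) \<noteq> 0" using nz by auto
  ultimately show False using assms chf_iter[of n \<xi> K] by simp
qed

lemma chf_zero_int:
  assumes "chf (\<nu> n) \<xi> = 0"
  shows "(\<exists>a::int. \<xi>$1 / (3 * real_of_int q1)^n = of_int a) \<and> (\<exists>b::int. \<xi>$2 / (3 * real_of_int q2)^n = of_int b)"
proof -
  obtain j where "Mf q1 q2 (n + j + 1) \<xi> = 0" using chf_zero[OF assms] by blast
  from Mf_zero[OF this] obtain k1 k2 :: int where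
    "3 * (\<xi>$1 / (3 * real_of_int q1)^(n + j + 1)) = of_int k1"
    "3 * (\<xi>$2 / (3 * real_of_int q2)^(n + j + 1)) = of_int k2" by blast
  then show ?thesis using int_lift[OF q1] int_lift[OF q2] by blast
qed

end


lemma ex_shift: "ex (of_int a + t) = ex t"
  by (simp add: ex_add ex_int)

theorem lemma2p7:
  fixes q1 q2 :: int and \<nu> :: "nat \<Rightarrow> (real^2) measure"
    and n :: nat and \<Lambda> :: "(real^2) set"
  assumes "1 \<le> q1" and "q1 \<le> q2"
    and "\<And>k. prob_space (\<nu> k)"
    and "\<And>k. sets (\<nu> k) = sets borel"
    and "\<And>k. weak_conv_seq (\<lambda>m. measure_pmf (fin_conv q1 q2 k m)) (\<nu> k)"
    and "n \<ge> 1"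
    and "orthogonal_set (\<nu> n) \<Lambda>"
  shows "orthogonal_set (\<nu> (n - 1)) \<Lambda> \<and> \<not> maximal_orthogonal_set (\<nu> (n - 1)) \<Lambda>"
proof -
  have q2: "1 \<le> q2" using assms(1,2) by linarith
  note rec = chf_rec[OF assms(1) q2 assms(3) assms(4) assms(5)]
  note zi = chf_zero_int[OF assms(1) q2 assms(3) assms(4) assms(5)]
  have rn: "\<And>\<xi>. chf (\<nu> (n - 1)) \<xi> = Mf q1 q2 n \<xi> * chf (\<nu> n) \<xi>"
    using rec[of "n - 1"] assms(6) by simp
  have orth: "\<And>l l'. l \<in> \<Lambda> \<Longrightarrow> l' \<in> \<Lambda> \<Longrightarrow> l \<noteq> l' \<Longrightarrow> chf (\<nu> n) (l - l') = 0"
    using assms(7) unfolding orthogonal_set_def orth_chf by blast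
  have cnt: "countable \<Lambda>" using assms(7) unfolding orthogonal_set_def by blast
  have P1: "orthogonal_set (\<nu> (n - 1)) \<Lambda>"
    unfolding orthogonal_set_def orth_chf using cnt orth rn by simp
  have "\<exists>\<Lambda>'. \<Lambda> \<subset> \<Lambda>' \<and> orthogonal_set (\<nu> (n - 1)) \<Lambda>'"
  proof (cases "\<Lambda> = {}")
    case True
    then show ?thesis
      by (intro exI[of _ "{0}"]) (auto simp: orthogonal_set_def)
  next
    case False
    then obtain l0 where l0: "l0 \<in> \<Lambda>" by blast
    define w :: "real^2" where "w = (\<chi> i. if i = 1 then (3 * real_of_int q1)^n / 3 else 2 * (3 * real_of_int q2)^n / 3)"
    define z where "z = l0 + w"
    have p1: "(3 * real_of_int q1)^n \<noteq> 0" using assms(1) by simp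
    have p2: "(3 * real_of_int q2)^n \<noteq> 0" using q2 by simp
    have w1: "w$1 / (3 * real_of_int q1)^n = 1/3" using p1 by (simp add: w_def)
    have w2: "w$2 / (3 * real_of_int q2)^n = 2/3" using p2 by (simp add: w_def)
    have Z: "(\<exists>a::int. (l0 - l)$1 / (3 * real_of_int q1)^n = of_int a) \<and>
             (\<exists>b::int. (l0 - l)$2 / (3 * real_of_int q2)^n = of_int b)" if "l \<in> \<Lambda>" for l
    proof (cases "l = l0")
      case True
      then show ?thesis by (intro conjI exI[of _ 0]) simp_all
    next
      case False
      then have "chf (\<nu> n) (l0 - l) = 0" using orth[OF l0 that] by auto
      then show ?thesis by (rule zi)
    qed
    have notin: "z \<notin> \<Lambda>"
    proof
      assume "z \<in> \<Lambda>"
      from Z[OF this] obtain a :: int where a: "(l0 - z)$1 / (3 * real_of_int q1)^n = of_int a" by blast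
      have "(l0 - z)$1 / (3 * real_of_int q1)^n = - (w$1 / (3 * real_of_int q1)^n)"
        by (simp add: z_def)
      with a have "real_of_int a = - (w$1 / (3 * real_of_int q1)^n)" by simp
      then have "real_of_int a = - (1/3)" by (simp only: w1)
      then have "3 * real_of_int a = -1" by simp
      then have "3 * a = -1" by linarith
      then show False by presburger
    qed
    have M0: "Mf q1 q2 n (z - l) = 0 \<and> Mf q1 q2 n (l - z) = 0" if "l \<in> \<Lambda>" for l
    proof -
      from Z[OF that] obtain a b :: int where
        a: "(l0 - l)$1 / (3 * real_of_int q1)^n = of_int a" and
        b: "(l0 - l)$2 / (3 * real_of_int q2)^n = of_int b" by blast
      have z1: "(z - l)$1 / (3 * real_of_int q1)^n = of_int a + 1/3"
      proof -
        have "(z - l)$1 = (l0 - l)$1 + w$1" by (simp add: z_def)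
        then have "(z - l)$1 / (3 * real_of_int q1)^n = (l0 - l)$1 / (3 * real_of_int q1)^n + w$1 / (3 * real_of_int q1)^n"
          by (simp only: add_divide_distrib)
        then show ?thesis by (simp only: a w1)
      qed
      have z2: "(z - l)$2 / (3 * real_of_int q2)^n = of_int b + 2/3"
      proof -
        have "(z - l)$2 = (l0 - l)$2 + w$2" by (simp add: z_def)
        then have "(z - l)$2 / (3 * real_of_int q2)^n = (l0 - l)$2 / (3 * real_of_int q2)^n + w$2 / (3 * real_of_int q2)^n"
          by (simp only: add_divide_distrib)
        then show ?thesis by (simp only: b w2)
      qed
      have y1: "(l - z)$1 / (3 * real_of_int q1)^n = of_int (-a) + (-1/3)"
      proof -
        have "(l - z)$1 = - ((z - l)$1)" by simp
        then have "(l - z)$1 / (3 * real_of_int q1)^n = - ((z - l)$1 / (3 * real_of_int q1)^n)"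
          by (simp only: minus_divide_left)
        then show ?thesis by (simp only: z1; simp)
      qed
      have y2: "(l - z)$2 / (3 * real_of_int q2)^n = of_int (-b) + (-2/3)"
      proof -
        have "(l - z)$2 = - ((z - l)$2)" by simp
        then have "(l - z)$2 / (3 * real_of_int q2)^n = - ((z - l)$2 / (3 * real_of_int q2)^n)"
          by (simp only: minus_divide_left)
        then show ?thesis by (simp only: z2; simp)
      qed
      show ?thesis
        unfolding Mf_def z1 z2 y1 y2 ex_shift
        using root3_pos root3_neg by simp
    qed
    show ?thesis
    proof (intro exI[of _ "insert z \<Lambda>"] conjI)
      show "\<Lambda> \<subset> insert z \<Lambda>" using notin by blast
      show "orthogonal_set (\<nu> (n - 1)) (insert z \<Lambda>)"
        unfolding orthogonal_set_def orth_chf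
        using cnt P1 M0 rn unfolding orthogonal_set_def orth_chf by auto
    qed
  qed
  then show ?thesis using P1 unfolding maximal_orthogonal_set_def by blast
qed

end
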